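(* Let $(X,\mathcal{B},\mu)$ be a $\sigma$-finite measure space and let $\varphi:X\to X$ be a measurable map for which there is $c>0$ with $\mu(\varphi^{-1}(B))\le c\,\mu(B)$ for all $B\in\mathcal{B}$. For $1\le q<\infty$ let $T_\varphi$ denote the composition operator $f\mapsto f\circ\varphi$ on $L^q(X,\mathcal{B},\mu)$. Then for any $p,p'\in[1,\infty)$, $T_\varphi$ is distributionally chaotic on $L^p(X,\mathcal{B},\mu)$ if and only if $T_\varphi$ is distributionally chaotic on $L^{p'}(X,\mathcal{B},\mu)$.
   Context: For $A\subseteq\mathbb{N}$, $\overline{\mathrm{dens}}(A)=\limsup_{N\to\infty}\frac{\operatorname{card}(A\cap[1,N])}{N}$ and $\underline{\mathrm{dens}}(A)=\liminf_{N\to\infty}\frac{\operatorname{card}(A\cap[1,N])}{N}$. An operator $T$ on a Banach space $Y$ is distributionally chaotic if there exist an uncountable set $\Gamma\subset Y$ and $\varepsilon>0$ such that for every $\delta>0$ and every pair of distinct $x,y\in\Gamma$: $\underline{\mathrm{dens}}\{j\in\mathbb{N}:\|T^jx-T^jy\|<\varepsilon\}=0$ and $\overline{\mathrm{dens}}\{j\in\mathbb{N}:\|T^jx-T^jy\|<\delta\}=1$. *)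

theory Defs
  imports "HOL-Analysis.Analysis"
begin

definition upper_dens :: "nat set \<Rightarrow> ereal" where
  "upper_dens A = limsup (\<lambda>N. ereal (real (card (A \<inter> {1..N})) / real N))"

definition lower_dens :: "nat set \<Rightarrow> ereal" where
  "lower_dens A = liminf (\<lambda>N. ereal (real (card (A \<inter> {1..N})) / real N))"

definition distr_chaotic :: "'b set \<Rightarrow> ('b \<Rightarrow> 'b \<Rightarrow> real) \<Rightarrow> ('b \<Rightarrow> 'b) \<Rightarrow> bool" where
  "distr_chaotic Y d T \<longleftrightarrow>
     (\<exists>\<Gamma>. \<Gamma> \<subseteq> Y \<and> uncountable \<Gamma> \<and>
       (\<exists>\<epsilon>>0. \<forall>\<delta>>0. \<forall>x\<in>\<Gamma>. \<forall>y\<in>\<Gamma>. x \<noteq> y \<longrightarrow>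
          lower_dens {j. d ((T^^j) x) ((T^^j) y) < \<epsilon>} = 0 \<and>
          upper_dens {j. d ((T^^j) x) ((T^^j) y) < \<delta>} = 1))"

definition lp_space :: "'a measure \<Rightarrow> real \<Rightarrow> ('a \<Rightarrow> real) set" where
  "lp_space M p = {f \<in> borel_measurable M. (\<integral>\<^sup>+ x. ennreal (\<bar>f x\<bar> powr p) \<partial>M) < \<infinity>}"

definition lp_norm :: "'a measure \<Rightarrow> real \<Rightarrow> ('a \<Rightarrow> real) \<Rightarrow> real" where
  "lp_norm M p f = (enn2real (\<integral>\<^sup>+ x. ennreal (\<bar>f x\<bar> powr p) \<partial>M)) powr (1 / p)"

definition comp_op :: "('a \<Rightarrow> 'a) \<Rightarrow> ('a \<Rightarrow> real) \<Rightarrow> ('a \<Rightarrow> real)" where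
  "comp_op \<phi> f = f \<circ> \<phi>"

definition comp_op_distr_chaotic_Lp :: "'a measure \<Rightarrow> real \<Rightarrow> ('a \<Rightarrow> 'a) \<Rightarrow> bool" where
  "comp_op_distr_chaotic_Lp M p \<phi> =
     distr_chaotic (lp_space M p) (\<lambda>f g. lp_norm M p (\<lambda>x. f x - g x)) (comp_op \<phi>)"

end

theory Submission
  imports Defs
begin


lemma comp_le:
  assumes phi: "\<phi> \<in> measurable M M" and c: "0 \<le> c"
    and H: "\<forall>B\<in>sets M. emeasure M (\<phi> -` B \<inter> space M) \<le> ennreal c * emeasure M B"
    and g: "g \<in> borel_measurable M"
  shows "(\<integral>\<^sup>+x. g (\<phi> x) \<partial>M) \<le> ennreal c * (\<integral>\<^sup>+x. g x \<partial>M)"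
proof -
  have "(\<integral>\<^sup>+x. g (\<phi> x) \<partial>M) = (\<integral>\<^sup>+x. g x \<partial>distr M M \<phi>)"
    by (simp add: nn_integral_distr phi g)
  also have "\<dots> \<le> (\<integral>\<^sup>+x. g x \<partial>density M (\<lambda>_. ennreal c))"
  proof (rule nn_integral_mono_measure)
    show "sets (distr M M \<phi>) = sets (density M (\<lambda>_. ennreal c))" by simp
    show "distr M M \<phi> \<le> density M (\<lambda>_. ennreal c)"
      unfolding le_measure_iff
    proof (simp, intro le_funI)
      fix X
      show "emeasure (distr M M \<phi>) X \<le> emeasure (density M (\<lambda>_. ennreal c)) X"
      proof (cases "X \<in> sets M")
        case True
        then show ?thesis using H
          by (simp add: emeasure_distr phi emeasure_density nn_integral_cmult_indicator)
      next
        case False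
        then show ?thesis by (simp add: emeasure_notin_sets)
      qed
    qed
  qed
  also have "\<dots> = ennreal c * (\<integral>\<^sup>+x. g x \<partial>M)"
    by (simp add: nn_integral_density g nn_integral_cmult)
  finally show ?thesis .
qed

lemma comp_funpow_le:
  assumes phi: "\<phi> \<in> measurable M M" and c: "1 \<le> c"
    and H: "\<forall>B\<in>sets M. emeasure M (\<phi> -` B \<inter> space M) \<le> ennreal c * emeasure M B"
    and g: "g \<in> borel_measurable M"
  shows "(\<integral>\<^sup>+x. g ((\<phi>^^(j + n)) x) \<partial>M) \<le> ennreal c ^ j * (\<integral>\<^sup>+x. g ((\<phi>^^n) x) \<partial>M)"
proof (induction j)
  case 0
  then show ?case by simp
next
  case (Suc j)
  have m: "(\<lambda>x. g ((\<phi>^^(j + n)) x)) \<in> borel_measurable M"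
    using g phi by measurable
  have "(\<integral>\<^sup>+x. g ((\<phi>^^(Suc j + n)) x) \<partial>M) = (\<integral>\<^sup>+x. g ((\<phi>^^(j + n)) (\<phi> x)) \<partial>M)"
    by (simp add: funpow_Suc_right del: funpow.simps)
  also have "\<dots> \<le> ennreal c * (\<integral>\<^sup>+x. g ((\<phi>^^(j + n)) x) \<partial>M)"
    using comp_le[OF phi _ H m] c by simp
  also have "\<dots> \<le> ennreal c * (ennreal c ^ j * (\<integral>\<^sup>+x. g ((\<phi>^^n) x) \<partial>M))"
    using Suc by (simp add: mult_left_mono)
  finally show ?case by (simp add: mult.assoc)
qed



definition thick :: "nat set \<Rightarrow> bool" where
  "thick A \<longleftrightarrow> (\<forall>\<eta>>0. \<forall>N0. \<exists>N\<ge>N0. real (card ({1..N} - A)) \<le> \<eta> * real N)"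

lemma card_split1: "card ({1..N} - A) + card (A \<inter> {1..N}) = N"
proof -
  have "{1..N} = ({1..N} - A) \<union> (A \<inter> {1..N})" by auto
  then have "card {1..N} = card ({1..N} - A) + card (A \<inter> {1..N})"
    by (metis Diff_disjoint card_Un_disjoint finite_Int finite_Diff finite_atLeastAtMost inf_commute Int_Diff)
  then show ?thesis by simp
qed

lemma upper_dens_thick: assumes "upper_dens A = 1" shows "thick A"
  unfolding thick_def
proof (intro allI impI)
  fix \<eta> :: real and N0 :: nat assume e: "\<eta> > 0"
  let ?X = "\<lambda>N. ereal (real (card (A \<inter> {1..N})) / real N)"
  have "frequently (\<lambda>N. ereal (1 - \<eta>) < ?X N) sequentially"
  proof (rule ccontr)
    assume "\<not> ?thesis"
    then have "eventually (\<lambda>N. ?X N \<le> ereal (1 - \<eta>)) sequentially"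
      by (simp add: not_frequently not_less)
    then have "Limsup sequentially ?X \<le> ereal (1 - \<eta>)" by (rule Limsup_bounded)
    then show False using assms e unfolding upper_dens_def by simp
  qed
  then obtain N where N: "N \<ge> N0" "ereal (1 - \<eta>) < ?X N"
    unfolding frequently_sequentially by blast
  show "\<exists>N\<ge>N0. real (card ({1..N} - A)) \<le> \<eta> * real N"
  proof (intro exI conjI)
    show "N \<ge> N0" by fact
    have cs: "real (card ({1..N} - A)) + real (card (A \<inter> {1..N})) = real N"
      using card_split1[of N A] by (metis of_nat_add)
    show "real (card ({1..N} - A)) \<le> \<eta> * real N"
    proof (cases "N = 0")
      case True then show ?thesis by simp
    next
      case False
      then have "1 - \<eta> < real (card (A \<inter> {1..N})) / real N" using N by simp
      then have "(1 - \<eta>) * real N < real (card (A \<inter> {1..N}))"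
        using False by (simp add: field_simps)
      then show ?thesis using cs by (simp add: algebra_simps)
    qed
  qed
qed

lemma thick_upper_dens: assumes "thick A" shows "upper_dens A = 1"
proof -
  let ?X = "\<lambda>N. ereal (real (card (A \<inter> {1..N})) / real N)"
  have le1: "?X N \<le> 1" for N
  proof -
    have "card (A \<inter> {1..N}) \<le> N" using card_split1[of N A] by linarith
    then show ?thesis by (cases "N = 0") (simp_all add: divide_le_eq_1)
  qed
  have "Limsup sequentially ?X \<le> 1" by (rule Limsup_bounded, rule always_eventually, rule allI, rule le1)
  moreover have "1 \<le> Limsup sequentially ?X"
  proof (rule ereal_le_epsilon2)
    fix e :: real assume e: "0 < e"
    have "ereal (1 - e) \<le> Limsup sequentially ?X"
    proof (rule ccontr)
      assume "\<not> ?thesis"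
      then have "eventually (\<lambda>N. ?X N < ereal (1 - e)) sequentially"
        by (intro Limsup_lessD) simp
      then obtain N1 where N1: "\<And>N. N \<ge> N1 \<Longrightarrow> ?X N < ereal (1 - e)"
        unfolding eventually_sequentially by blast
      obtain N where N: "N \<ge> max N1 1" "real (card ({1..N} - A)) \<le> e * real N"
        using assms e unfolding thick_def by blast
      have cs: "real (card ({1..N} - A)) + real (card (A \<inter> {1..N})) = real N"
        using card_split1[of N A] by (metis of_nat_add)
      have Np: "real N > 0" using N by simp
      have "(1 - e) * real N \<le> real (card (A \<inter> {1..N}))" using cs N by (simp add: algebra_simps)
      then have "1 - e \<le> real (card (A \<inter> {1..N})) / real N" using Np by (simp add: field_simps)
      moreover have "?X N < ereal (1 - e)" using N1 N by simp
      ultimately show False by simp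
    qed
    then have "ereal (1 - e) + ereal e \<le> Limsup sequentially ?X + ereal e"
      by (rule add_right_mono)
    then show "1 \<le> Limsup sequentially ?X + ereal e" by (simp add: one_ereal_def)
  qed
  ultimately show ?thesis unfolding upper_dens_def by (rule antisym)
qed

lemma lower_dens_thick: assumes "lower_dens A = 0" shows "thick (- A)"
  unfolding thick_def
proof (intro allI impI)
  fix \<eta> :: real and N0 :: nat assume e: "\<eta> > 0"
  let ?X = "\<lambda>N. ereal (real (card (A \<inter> {1..N})) / real N)"
  have "frequently (\<lambda>N. ?X N < ereal \<eta>) sequentially"
  proof (rule ccontr)
    assume "\<not> ?thesis"
    then have "eventually (\<lambda>N. ereal \<eta> \<le> ?X N) sequentially"
      by (simp add: not_frequently not_less)
    then have "ereal \<eta> \<le> Liminf sequentially ?X" by (rule Liminf_bounded)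
    then show False using assms e unfolding lower_dens_def by simp
  qed
  then obtain N where N: "N \<ge> N0" "?X N < ereal \<eta>"
    unfolding frequently_sequentially by blast
  show "\<exists>N\<ge>N0. real (card ({1..N} - - A)) \<le> \<eta> * real N"
  proof (intro exI conjI)
    show "N \<ge> N0" by fact
    have eq: "{1..N} - - A = A \<inter> {1..N}" by auto
    show "real (card ({1..N} - - A)) \<le> \<eta> * real N"
    proof (cases "N = 0")
      case True then show ?thesis by simp
    next
      case False
      then have "real (card (A \<inter> {1..N})) / real N < \<eta>" using N by simp
      then show ?thesis using False eq by (simp add: field_simps)
    qed
  qed
qed

lemma thick_lower_dens: assumes "thick (- A)" shows "lower_dens A = 0"
proof -
  let ?X = "\<lambda>N. ereal (real (card (A \<inter> {1..N})) / real N)"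
  have "0 \<le> Liminf sequentially ?X" by (rule Liminf_bounded) simp
  moreover have "Liminf sequentially ?X \<le> 0"
  proof (rule ereal_le_epsilon2)
    fix e :: real assume e: "0 < e"
    have "Liminf sequentially ?X \<le> ereal e"
    proof (rule ccontr)
      assume "\<not> ?thesis"
      then have "eventually (\<lambda>N. ereal e < ?X N) sequentially"
        by (intro less_LiminfD) simp
      then obtain N1 where N1: "\<And>N. N \<ge> N1 \<Longrightarrow> ereal e < ?X N"
        unfolding eventually_sequentially by blast
      obtain N where N: "N \<ge> max N1 1" "real (card ({1..N} - - A)) \<le> e * real N"
        using assms e unfolding thick_def by blast
      have eq: "{1..N} - - A = A \<inter> {1..N}" by auto
      have Np: "real N > 0" using N by simp
      have "real (card (A \<inter> {1..N})) / real N \<le> e" using N eq Np by (simp add: field_simps)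
      moreover have "ereal e < ?X N" using N1 N by simp
      ultimately show False by simp
    qed
    then show "Liminf sequentially ?X \<le> 0 + ereal e" by simp
  qed
  ultimately show ?thesis unfolding lower_dens_def by (intro antisym) 
qed

lemma thick_mono: "thick A \<Longrightarrow> A \<subseteq> B \<Longrightarrow> thick B"
  unfolding thick_def
proof (intro allI impI)
  fix \<eta> :: real and N0 assume t: "\<forall>\<eta>>0. \<forall>N0. \<exists>N\<ge>N0. real (card ({1..N} - A)) \<le> \<eta> * real N"
    and AB: "A \<subseteq> B" and e: "\<eta> > 0"
  then obtain N where N: "N \<ge> N0" "real (card ({1..N} - A)) \<le> \<eta> * real N" by blast
  have "card ({1..N} - B) \<le> card ({1..N} - A)" using AB by (intro card_mono) auto
  then show "\<exists>N\<ge>N0. real (card ({1..N} - B)) \<le> \<eta> * real N" using N by (intro exI[of _ N]) auto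
qed

lemma thick_large: assumes "thick A" shows "\<exists>j\<in>A. j \<ge> N0"
proof (rule ccontr)
  assume "\<not> ?thesis"
  then have sub: "A \<inter> {1..N} \<subseteq> {1..N0}" for N by auto
  obtain N where N: "N \<ge> 2 * N0 + 2" "real (card ({1..N} - A)) \<le> (1/2) * real N"
    using assms unfolding thick_def by (metis half_gt_zero zero_less_one)
  have "card (A \<inter> {1..N}) \<le> N0" using card_mono[OF _ sub[of N]] by simp
  moreover have "real (card ({1..N} - A)) + real (card (A \<inter> {1..N})) = real N"
    using card_split1[of N A] by (metis of_nat_add)
  ultimately show False using N by linarith
qed



lemma thick_shift: assumes "thick A" shows "thick {j. j + n \<in> A}"
  unfolding thick_def
proof (intro allI impI)
  fix \<eta> :: real and N0 assume e: "\<eta> > 0"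
  obtain N where N: "N \<ge> N0 + 2 * n" "real (card ({1..N} - A)) \<le> (\<eta>/2) * real N"
    using assms e unfolding thick_def by (meson half_gt_zero)
  define N' where "N' = N - n"
  have sub: "{1..N'} - {j. j + n \<in> A} \<subseteq> (\<lambda>i. i - n) ` ({1..N} - A)"
  proof
    fix j assume j: "j \<in> {1..N'} - {j. j + n \<in> A}"
    then have "j + n \<in> {1..N} - A" using N unfolding N'_def by auto
    moreover have "j = (j + n) - n" by simp
    ultimately show "j \<in> (\<lambda>i. i - n) ` ({1..N} - A)" by blast
  qed
  have "card ({1..N'} - {j. j + n \<in> A}) \<le> card ((\<lambda>i. i - n) ` ({1..N} - A))"
    by (rule card_mono[OF _ sub]) simp
  also have "\<dots> \<le> card ({1..N} - A)" by (rule card_image_le) simp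
  finally have c: "real (card ({1..N'} - {j. j + n \<in> A})) \<le> (\<eta>/2) * real N" using N by linarith
  have "real N \<le> 2 * real N'" using N unfolding N'_def by linarith
  then have "(\<eta>/2) * real N \<le> \<eta> * real N'" using e by (simp add: field_simps)
  then show "\<exists>N\<ge>N0. real (card ({1..N} - {j. j + n \<in> A})) \<le> \<eta> * real N"
    using c N unfolding N'_def by (intro exI[of _ "N - n"]) auto
qed



lemma irregular_seq:
  fixes s :: "nat \<Rightarrow> ennreal" and C e :: real
  assumes C: "1 \<le> C" and e: "0 < e"
    and grow: "\<And>j n. s (j + n) \<le> ennreal C ^ j * s n"
    and big: "thick {j. ennreal e \<le> s j}"
    and small: "\<And>\<delta>. \<delta> > 0 \<Longrightarrow> thick {j. s j < ennreal \<delta>}"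
  shows "\<exists>\<alpha> n. (\<Sum>i. ennreal (\<alpha> i) * s (n i)) < \<infinity>
     \<and> (\<forall>M::real. thick {j. ennreal M < (\<Sum>i. ennreal (\<alpha> i) * s (j + n i))})
     \<and> (\<forall>\<delta>>0. thick {j. (\<Sum>i. ennreal (\<alpha> i) * s (j + n i)) < ennreal \<delta>})"
proof -
  define \<alpha> where "\<alpha> k = real (k + 1) / e" for k
  define dk where "dk k = (1/4::real)^k / \<alpha> k" for k
  define B where "B k = {j. s j < ennreal (dk k)}" for k
  define Mcond where "Mcond k n M \<longleftrightarrow> n \<le> M \<and>
      real ((k+1) * card ({1..M+n} - B k)) \<le> real M / real (k+1)" for k n M
  define Ncond where "Ncond k Mp n \<longleftrightarrow>
      ennreal (\<alpha> k) * ennreal C ^ Mp * s n < ennreal ((1/4::real)^k)" for k Mp n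
  have \<alpha>pos: "\<alpha> k > 0" for k using e unfolding \<alpha>_def by simp
  have \<alpha>mono: "i \<le> k \<Longrightarrow> \<alpha> i \<le> \<alpha> k" for i k
    using e unfolding \<alpha>_def by (simp add: divide_right_mono)
  have dkpos: "dk k > 0" for k using \<alpha>pos unfolding dk_def by simp
  have exN: "\<exists>n>n0. Ncond k Mp n" for k Mp n0
  proof -
    define d' where "d' = (1/4::real)^k / (\<alpha> k * C ^ Mp)"
    have apos: "\<alpha> k * C ^ Mp > 0" using \<alpha>pos C by simp
    have "d' > 0" using apos unfolding d'_def by simp
    then obtain j where j: "j \<in> {j. s j < ennreal d'}" "j \<ge> Suc n0"
      using thick_large small by blast
    have eq: "ennreal (\<alpha> k) * ennreal C ^ Mp = ennreal (\<alpha> k * C ^ Mp)"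
      using \<alpha>pos[of k] C by (simp add: ennreal_power ennreal_mult[symmetric])
    have "ennreal (\<alpha> k * C ^ Mp) * s j < ennreal (\<alpha> k * C ^ Mp) * ennreal d'"
      using j apos by (intro ennreal_mult_strict_left_mono) auto
    also have "\<dots> = ennreal ((1/4::real)^k)"
      using apos \<alpha>pos[of k] C by (simp add: ennreal_mult[symmetric] d'_def)
    finally show ?thesis using j eq unfolding Ncond_def by (intro exI[of _ j]) auto
  qed
  have exM: "\<exists>M>Mp. Mcond k n M" for k n Mp
  proof -
    define \<eta> where "\<eta> = 1 / (2 * (real k + 1)^2)"
    have "\<eta> > 0" unfolding \<eta>_def by simp
    then obtain N where N: "N \<ge> 2 * n + Mp + 1" "real (card ({1..N} - B k)) \<le> \<eta> * real N"
      using small[OF dkpos[of k]] unfolding thick_def B_def by blast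
    define M where "M = N - n"
    have NM: "N = M + n" "real N \<le> 2 * real M" using N unfolding M_def by auto
    have "real ((k+1) * card ({1..M+n} - B k)) = (real k + 1) * real (card ({1..N} - B k))"
      using NM by (simp add: algebra_simps)
    also have "\<dots> \<le> (real k + 1) * (\<eta> * real N)"
      using N by (intro mult_left_mono) auto
    also have "\<dots> = real N / (2 * (real k + 1))" proof -
      have kp: "real k + 1 \<noteq> 0" by simp
      show ?thesis unfolding \<eta>_def using kp by (simp add: power2_eq_square divide_simps)
    qed
    also have "\<dots> \<le> real M / real (k+1)"
    proof -
      have "real n \<le> real M" using NM by simp
      then have "real n * (real k + 1) \<le> real M * (real k + 1)" by (rule mult_right_mono) simp
      then show ?thesis using NM by (simp add: field_simps)
    qed
    finally show ?thesis unfolding Mcond_def using N NM by (intro exI[of _ M]) auto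
  qed
  define P where "P k x \<longleftrightarrow> Mcond k (fst x) (snd x) \<and> (k = 0 \<longrightarrow> Ncond 0 0 (fst x))" for k x
  define Q where "Q k x y \<longleftrightarrow> fst x < fst y \<and> snd x < snd y \<and> Ncond (Suc k) (snd x) (fst y)"
    for k and x y :: "nat \<times> nat"
  have "\<exists>f. \<forall>k. P k (f k) \<and> Q k (f k) (f (Suc k))"
  proof (rule dependent_nat_choice)
    obtain n where n: "Ncond 0 0 n" using exN by blast
    obtain M where M: "Mcond 0 n M" using exM by blast
    show "\<exists>x. P 0 x" using n M unfolding P_def by (intro exI[of _ "(n, M)"]) auto
  next
    fix x k assume "P k x"
    obtain n' where n': "n' > fst x" "Ncond (Suc k) (snd x) n'" using exN by blast
    obtain M' where M': "M' > snd x" "Mcond (Suc k) n' M'" using exM by blast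
    show "\<exists>y. P (Suc k) y \<and> Q k x y" using n' M' unfolding P_def Q_def
      by (intro exI[of _ "(n', M')"]) auto
  qed
  then obtain f where f: "\<And>k. P k (f k)" "\<And>k. Q k (f k) (f (Suc k))" by blast
  define n where "n k = fst (f k)" for k
  define M where "M k = snd (f k)" for k
  define Mp where "Mp k = (if k = 0 then 0 else M (k - 1))" for k
  have smn: "strict_mono n" using f(2) unfolding Q_def n_def by (intro strict_mono_Suc_iff[THEN iffD2]) auto
  have smM: "strict_mono M" using f(2) unfolding Q_def M_def by (intro strict_mono_Suc_iff[THEN iffD2]) auto
  have Mc: "Mcond k (n k) (M k)" for k using f(1)[of k] unfolding P_def n_def M_def by auto
  have Nc: "Ncond k (Mp k) (n k)" for k
  proof (cases k)
    case 0 then show ?thesis using f(1)[of 0] unfolding P_def n_def Mp_def by auto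
  next
    case (Suc k') then show ?thesis using f(2)[of k'] unfolding Q_def n_def Mp_def M_def by auto
  qed
  have Cge: "1 \<le> ennreal C ^ m" for m using C by (simp add: ennreal_power one_le_power)
  have termb: "ennreal (\<alpha> k) * (ennreal C ^ m * s (n k)) < ennreal ((1/4::real)^k)" if "m \<le> Mp k" for k m
  proof -
    have "ennreal C ^ m \<le> ennreal C ^ Mp k" using that C by (intro power_increasing) auto
    then have "ennreal (\<alpha> k) * (ennreal C ^ m * s (n k)) \<le> ennreal (\<alpha> k) * ennreal C ^ Mp k * s (n k)"
      by (simp add: mult.assoc mult_left_mono mult_right_mono)
    also have "\<dots> < ennreal ((1/4::real)^k)" using Nc[of k] unfolding Ncond_def .
    finally show ?thesis .
  qed
  define t where "t j = (\<Sum>i. ennreal (\<alpha> i) * s (j + n i))" for j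
  have geo: "(\<Sum>i. ennreal (a * (1/2::real)^i)) = ennreal (2 * a)" if "a \<ge> 0" for a
  proof -
    have "(\<Sum>i. ennreal (a * (1/2::real)^i)) = ennreal (\<Sum>i. a * (1/2::real)^i)"
      using that by (intro suminf_ennreal2) (auto intro: summable_mult summable_geometric)
    also have "(\<Sum>i. a * (1/2::real)^i) = a * 2"
      by (subst suminf_mult) (auto simp: suminf_geometric summable_geometric)
    finally show ?thesis by (simp add: mult.commute)
  qed
  have claim1: "t 0 < \<infinity>"
  proof -
    have b: "ennreal (\<alpha> i) * s (0 + n i) \<le> ennreal (1 * (1/2::real)^i)" for i
    proof -
      have "ennreal (\<alpha> i) * s (0 + n i) \<le> ennreal (\<alpha> i) * (ennreal C ^ 0 * s (n i))" by simp
      also have "\<dots> < ennreal ((1/4::real)^i)" by (rule termb) simp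
      also have "\<dots> \<le> ennreal (1 * (1/2::real)^i)"
      proof (rule ennreal_leI)
        have "(1/4::real)^i \<le> (1/2)^i" by (rule power_mono) auto
        then show "(1/4::real)^i \<le> 1 * (1/2)^i" by simp
      qed
      finally show ?thesis by (rule less_imp_le)
    qed
    have "t 0 \<le> (\<Sum>i. ennreal (1 * (1/2::real)^i))"
      unfolding t_def by (rule suminf_le[OF b summableI summableI])
    also have "\<dots> = ennreal (2 * 1)" by (rule geo) simp
    finally have "t 0 \<le> ennreal (2 * 1)" .
    then show ?thesis by (metis ennreal_less_top infinity_ennreal_def le_less_trans)
  qed
  have claim2: "thick {j. ennreal R < t j}" for R :: real
  proof -
    obtain k0 :: nat where k0: "R < real k0" using reals_Archimedean2 by blast
    define k where "k = k0"
    have k: "R < real (k + 1)" using k0 unfolding k_def by simp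
    have th: "thick {j. j + n k \<in> {j. ennreal e \<le> s j}}" by (rule thick_shift[OF big])
    show ?thesis
    proof (rule thick_mono[OF th], safe)
      fix j assume j: "ennreal e \<le> s (j + n k)"
      have "ennreal R < ennreal (real (k + 1))" using k by (intro ennreal_lessI) auto
      also have "\<dots> = ennreal (\<alpha> k) * ennreal e" using e
        by (simp add: \<alpha>_def ennreal_mult[symmetric] del: of_nat_Suc)
      also have "\<dots> \<le> ennreal (\<alpha> k) * s (j + n k)" using j by (intro mult_left_mono) auto
      also have "\<dots> \<le> t j" unfolding t_def
        using sum_le_suminf[OF summableI, of "{k}" "\<lambda>i. ennreal (\<alpha> i) * s (j + n i)"] by simp
      finally show "ennreal R < t j" .
    qed
  qed
  have claim3: "thick {j. t j < ennreal \<delta>}" if dpos: "\<delta> > 0" for \<delta>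
    unfolding thick_def
  proof (intro allI impI)
    fix \<eta> :: real and N0 assume epos: "\<eta> > 0"
    obtain k0 where k0: "(1/2::real)^k0 < \<delta>/2" using real_arch_pow_inv[of "\<delta>/2" "1/2"] dpos by auto
    obtain k1 where k1: "k1 > 0" "inverse (real k1) < \<eta>" using ex_inverse_of_nat_less epos by blast
    define k where "k = max N0 (max k0 k1)"
    define N where "N = M k"
    have "N \<ge> k" unfolding N_def using smM by (rule strict_mono_imp_increasing)
    then have NN0: "N \<ge> N0" unfolding k_def by simp
    have hk: "(1/2::real)^k < \<delta>/2"
      using k0 by (rule le_less_trans[rotated]) (intro power_decreasing, auto simp: k_def)
    have ik: "1 / real (k + 1) \<le> \<eta>"
    proof -
      have "1 / real (k+1) \<le> 1 / real k1" using k1 by (intro divide_left_mono) (auto simp: k_def)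
      then show ?thesis using k1 by (simp add: inverse_eq_divide)
    qed
    define G where "G = {j\<in>{1..N}. \<forall>i\<le>k. j + n i \<in> B k}"
    have Gsub: "G \<subseteq> {j. t j < ennreal \<delta>}"
    proof
      fix j assume j: "j \<in> G"
      have "t j \<le> (\<Sum>i. ennreal ((1/2::real)^k * (1/2::real)^i))"
        unfolding t_def
      proof (intro suminf_le summableI)
        fix i
        show "ennreal (\<alpha> i) * s (j + n i) \<le> ennreal ((1/2::real)^k * (1/2::real)^i)"
        proof (cases "i \<le> k")
          case True
          then have "s (j + n i) < ennreal (dk k)" using j unfolding G_def B_def by auto
          then have "ennreal (\<alpha> i) * s (j + n i) \<le> ennreal (\<alpha> i) * ennreal (dk k)"
            by (intro mult_left_mono) auto
          also have "\<dots> = ennreal (\<alpha> i * dk k)" using \<alpha>pos[of i] dkpos[of k] by (simp add: ennreal_mult)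
          also have "\<dots> \<le> ennreal ((1/4::real)^k)"
          proof (intro ennreal_leI)
            have "\<alpha> i * dk k \<le> \<alpha> k * dk k" using \<alpha>mono[OF True] dkpos[of k] by (intro mult_right_mono) auto
            also have "\<dots> = (1/4)^k" using \<alpha>pos[of k] unfolding dk_def by simp
            finally show "\<alpha> i * dk k \<le> (1/4)^k" .
          qed
          also have "\<dots> \<le> ennreal ((1/2::real)^k * (1/2::real)^i)"
          proof (intro ennreal_leI)
            have "(1/4::real)^k = (1/2)^k * (1/2)^k" by (simp add: power_mult_distrib[symmetric])
            also have "\<dots> \<le> (1/2)^k * (1/2)^i" using True by (intro mult_left_mono power_decreasing) auto
            finally show "(1/4::real)^k \<le> (1/2)^k * (1/2)^i" .
          qed
          finally show ?thesis .
        next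
          case False
          then have i0: "i \<noteq> 0" "k \<le> i - 1" by auto
          have jM: "j \<le> Mp i"
          proof -
            have "j \<le> M k" using j unfolding G_def N_def by auto
            also have "M k \<le> M (i - 1)" using smM i0 by (simp add: strict_mono_less_eq)
            finally show ?thesis unfolding Mp_def using i0 by simp
          qed
          have "ennreal (\<alpha> i) * s (j + n i) \<le> ennreal (\<alpha> i) * (ennreal C ^ j * s (n i))"
            using grow by (intro mult_left_mono) auto
          also have "\<dots> < ennreal ((1/4::real)^i)" using termb jM by blast
          also have "\<dots> \<le> ennreal ((1/2::real)^k * (1/2::real)^i)"
          proof (intro ennreal_leI)
            have "(1/4::real)^i = (1/2)^i * (1/2)^i" by (simp add: power_mult_distrib[symmetric])
            also have "\<dots> \<le> (1/2)^k * (1/2)^i" using False by (intro mult_right_mono power_decreasing) auto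
            finally show "(1/4::real)^i \<le> (1/2)^k * (1/2)^i" .
          qed
          finally show ?thesis by simp
        qed
      qed
      also have "\<dots> = ennreal (2 * (1/2::real)^k)" by (rule geo) simp
      also have "\<dots> < ennreal \<delta>" using hk dpos by (intro ennreal_lessI) auto
      finally show "j \<in> {j. t j < ennreal \<delta>}" by simp
    qed
    have cG: "card ({1..N} - G) \<le> (k+1) * card ({1..N + n k} - B k)"
    proof -
      have "{1..N} - G \<subseteq> (\<Union>i\<in>{..k}. {j\<in>{1..N}. j + n i \<notin> B k})"
        unfolding G_def by auto
      then have "card ({1..N} - G) \<le> card (\<Union>i\<in>{..k}. {j\<in>{1..N}. j + n i \<notin> B k})"
        by (intro card_mono) auto
      also have "\<dots> \<le> (\<Sum>i\<in>{..k}. card {j\<in>{1..N}. j + n i \<notin> B k})" by (intro card_UN_le) auto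
      also have "\<dots> \<le> (\<Sum>i\<in>{..k}. card ({1..N + n k} - B k))"
      proof (intro sum_mono)
        fix i assume i: "i \<in> {..k}"
        have nik: "n i \<le> n k" using i smn by (simp add: strict_mono_less_eq)
        have "{j\<in>{1..N}. j + n i \<notin> B k} \<subseteq> (\<lambda>x. x - n i) ` ({1..N + n k} - B k)"
        proof
          fix j assume j: "j \<in> {j\<in>{1..N}. j + n i \<notin> B k}"
          then have "j + n i \<in> {1..N + n k} - B k" using nik by auto
          moreover have "j = (j + n i) - n i" by simp
          ultimately show "j \<in> (\<lambda>x. x - n i) ` ({1..N + n k} - B k)" by blast
        qed
        then have "card {j\<in>{1..N}. j + n i \<notin> B k} \<le> card ((\<lambda>x. x - n i) ` ({1..N + n k} - B k))"
          by (intro card_mono) auto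
        also have "\<dots> \<le> card ({1..N + n k} - B k)" by (intro card_image_le) auto
        finally show "card {j\<in>{1..N}. j + n i \<notin> B k} \<le> card ({1..N + n k} - B k)" .
      qed
      also have "\<dots> = (k+1) * card ({1..N + n k} - B k)" by simp
      finally show ?thesis .
    qed
    have "card ({1..N} - {j. t j < ennreal \<delta>}) \<le> card ({1..N} - G)"
      using Gsub by (intro card_mono) auto
    then have "real (card ({1..N} - {j. t j < ennreal \<delta>})) \<le> real ((k+1) * card ({1..N + n k} - B k))"
      using cG by linarith
    also have "\<dots> \<le> real N / real (k+1)" using Mc[of k] unfolding Mcond_def N_def by simp
    also have "\<dots> = real N * (1 / real (k+1))" by simp
    also have "\<dots> \<le> real N * \<eta>" using ik by (intro mult_left_mono) auto
    finally show "\<exists>N\<ge>N0. real (card ({1..N} - {j. t j < ennreal \<delta>})) \<le> \<eta> * real N"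
      using NN0 by (intro exI[of _ N]) (simp add: mult.commute)
  qed
  have c1: "(\<Sum>i. ennreal (\<alpha> i) * s (n i)) < \<infinity>" using claim1 unfolding t_def by simp
  show ?thesis
    apply (rule exI[of _ \<alpha>], rule exI[of _ n])
    using c1 claim2 claim3 unfolding t_def by blast
qed



lemma comp_op_iter: "(comp_op \<phi> ^^ j) f = f \<circ> (\<phi> ^^ j)"
proof (induction j)
  case 0 then show ?case by simp
next
  case (Suc j)
  have "(comp_op \<phi> ^^ Suc j) f = ((comp_op \<phi> ^^ j) f) \<circ> \<phi>"
    by (simp only: funpow.simps o_apply comp_op_def)
  also have "\<dots> = (f \<circ> (\<phi> ^^ j)) \<circ> \<phi>" by (simp only: Suc.IH)
  also have "\<dots> = f \<circ> (\<phi> ^^ Suc j)" by (simp add: funpow_Suc_right comp_assoc del: funpow.simps)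
  finally show ?case .
qed

lemma powr_lt_iff:
  fixes r \<delta> p :: real
  assumes "0 \<le> r" "0 < \<delta>" "0 < p"
  shows "r powr (1/p) < \<delta> \<longleftrightarrow> r < \<delta> powr p"
proof
  assume a: "r powr (1/p) < \<delta>"
  have "(r powr (1/p)) powr p < \<delta> powr p" using a assms by (intro powr_less_mono2) auto
  then show "r < \<delta> powr p" using assms by (simp add: powr_powr)
next
  assume a: "r < \<delta> powr p"
  have "r powr (1/p) < (\<delta> powr p) powr (1/p)" using a assms by (intro powr_less_mono2) auto
  then show "r powr (1/p) < \<delta>" using assms by (simp add: powr_powr)
qed

lemma powr_diff_bound:
  fixes a b p :: real assumes "p \<ge> 1"
  shows "\<bar>a - b\<bar> powr p \<le> 2 powr p * (\<bar>a\<bar> powr p + \<bar>b\<bar> powr p)"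
proof -
  have "\<bar>a - b\<bar> \<le> 2 * max \<bar>a\<bar> \<bar>b\<bar>" by linarith
  then have "\<bar>a - b\<bar> powr p \<le> (2 * max \<bar>a\<bar> \<bar>b\<bar>) powr p" using assms by (intro powr_mono2) auto
  also have "\<dots> = 2 powr p * max \<bar>a\<bar> \<bar>b\<bar> powr p" by (simp add: powr_mult)
  also have "max \<bar>a\<bar> \<bar>b\<bar> powr p \<le> \<bar>a\<bar> powr p + \<bar>b\<bar> powr p" by (simp add: max_def)
  then have "2 powr p * max \<bar>a\<bar> \<bar>b\<bar> powr p \<le> 2 powr p * (\<bar>a\<bar> powr p + \<bar>b\<bar> powr p)"
    by (intro mult_left_mono) auto
  finally show ?thesis .
qed

lemma onedir:
  fixes M :: "'a measure" and \<phi> :: "'a \<Rightarrow> 'a" and c p q :: real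
  assumes phi: "\<phi> \<in> measurable M M"
    and c: "c > 0"
    and H0: "\<forall>B\<in>sets M. emeasure M (\<phi> -` B \<inter> space M) \<le> ennreal c * emeasure M B"
    and p: "1 \<le> p" and q: "1 \<le> q"
    and dc: "comp_op_distr_chaotic_Lp M p \<phi>"
  shows "comp_op_distr_chaotic_Lp M q \<phi>"
proof -
  define C where "C = max c 1"
  have C1: "1 \<le> C" unfolding C_def by simp
  have H: "\<forall>B\<in>sets M. emeasure M (\<phi> -` B \<inter> space M) \<le> ennreal C * emeasure M B"
  proof
    fix B assume B: "B \<in> sets M"
    have "ennreal c \<le> ennreal C" unfolding C_def by (intro ennreal_leI) simp
    then have "ennreal c * emeasure M B \<le> ennreal C * emeasure M B" by (rule mult_right_mono) simp
    then show "emeasure M (\<phi> -` B \<inter> space M) \<le> ennreal C * emeasure M B" using H0 B by (meson order_trans)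
  qed
  note grow = comp_funpow_le[OF phi C1 H]
  have "distr_chaotic (lp_space M p) (\<lambda>f g. lp_norm M p (\<lambda>x. f x - g x)) (comp_op \<phi>)"
    using dc unfolding comp_op_distr_chaotic_Lp_def .
  then obtain \<Gamma> where G12: "\<Gamma> \<subseteq> lp_space M p" "uncountable \<Gamma>"
    and "\<exists>\<epsilon>>0. \<forall>\<delta>>0. \<forall>x\<in>\<Gamma>. \<forall>y\<in>\<Gamma>. x \<noteq> y \<longrightarrow>
          lower_dens {j. lp_norm M p (\<lambda>z. (comp_op \<phi> ^^ j) x z - (comp_op \<phi> ^^ j) y z) < \<epsilon>} = 0 \<and>
          upper_dens {j. lp_norm M p (\<lambda>z. (comp_op \<phi> ^^ j) x z - (comp_op \<phi> ^^ j) y z) < \<delta>} = 1"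
    unfolding distr_chaotic_def apply - apply (erule exE) apply (erule conjE)+ apply (rule that) apply assumption+ done
  then obtain \<epsilon> where G3: "\<epsilon> > 0"
    and Gp0: "\<forall>\<delta>>0. \<forall>x\<in>\<Gamma>. \<forall>y\<in>\<Gamma>. x \<noteq> y \<longrightarrow>
          lower_dens {j. lp_norm M p (\<lambda>z. (comp_op \<phi> ^^ j) x z - (comp_op \<phi> ^^ j) y z) < \<epsilon>} = 0 \<and>
          upper_dens {j. lp_norm M p (\<lambda>z. (comp_op \<phi> ^^ j) x z - (comp_op \<phi> ^^ j) y z) < \<delta>} = 1"
    apply - apply (erule exE) apply (erule conjE) apply (rule that) apply assumption+ done
  note G = G12 G3
  have Gp: "lower_dens {j. lp_norm M p (\<lambda>z. (comp_op \<phi> ^^ j) x z - (comp_op \<phi> ^^ j) y z) < \<epsilon>} = 0 \<and>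
          upper_dens {j. lp_norm M p (\<lambda>z. (comp_op \<phi> ^^ j) x z - (comp_op \<phi> ^^ j) y z) < \<delta>} = 1"
    if "\<delta> > 0" "x \<in> \<Gamma>" "y \<in> \<Gamma>" "x \<noteq> y" for \<delta> x y
    using Gp0 that by blast
  have "\<Gamma> \<noteq> {}" using G(2) by auto
  then obtain f where f: "f \<in> \<Gamma>" by blast
  obtain g where g: "g \<in> \<Gamma>" "g \<noteq> f"
  proof -
    have "\<not> \<Gamma> \<subseteq> {f}"
    proof
      assume "\<Gamma> \<subseteq> {f}"
      then have "countable \<Gamma>" by (rule countable_subset) simp
      then show False using G(2) by simp
    qed
    then show ?thesis using that by blast
  qed
  have fm[measurable]: "f \<in> borel_measurable M" and fi: "(\<integral>\<^sup>+ x. ennreal (\<bar>f x\<bar> powr p) \<partial>M) < \<infinity>"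
    using G(1) f unfolding lp_space_def by auto
  have gm[measurable]: "g \<in> borel_measurable M" and gi: "(\<integral>\<^sup>+ x. ennreal (\<bar>g x\<bar> powr p) \<partial>M) < \<infinity>"
    using G(1) g unfolding lp_space_def by auto
  define u where "u x = ennreal (\<bar>g x - f x\<bar> powr p)" for x
  have um[measurable]: "u \<in> borel_measurable M" unfolding u_def by measurable
  define s where "s j = (\<integral>\<^sup>+ x. u ((\<phi>^^j) x) \<partial>M)" for j
  have sgrow: "s (j + n) \<le> ennreal C ^ j * s n" for j n unfolding s_def by (rule grow[OF um])
  have s0: "s 0 < \<infinity>"
  proof -
    have "s 0 \<le> (\<integral>\<^sup>+ x. ennreal (2 powr p) * (ennreal (\<bar>g x\<bar> powr p) + ennreal (\<bar>f x\<bar> powr p)) \<partial>M)"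
      unfolding s_def u_def
    proof (intro nn_integral_mono)
      fix x
      have "\<bar>g x - f x\<bar> powr p \<le> 2 powr p * (\<bar>g x\<bar> powr p + \<bar>f x\<bar> powr p)" by (rule powr_diff_bound[OF p])
      then show "ennreal (\<bar>g ((\<phi> ^^ 0) x) - f ((\<phi> ^^ 0) x)\<bar> powr p)
          \<le> ennreal (2 powr p) * (ennreal (\<bar>g x\<bar> powr p) + ennreal (\<bar>f x\<bar> powr p))"
      proof -
        have eq: "ennreal (2 powr p) * (ennreal (\<bar>g x\<bar> powr p) + ennreal (\<bar>f x\<bar> powr p))
            = ennreal (2 powr p * (\<bar>g x\<bar> powr p + \<bar>f x\<bar> powr p))"
          by (simp add: ennreal_mult ennreal_plus)
        show ?thesis unfolding eq using \<open>\<bar>g x - f x\<bar> powr p \<le> _\<close> by (simp add: ennreal_leI)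
      qed
    qed
    also have "\<dots> = ennreal (2 powr p) * ((\<integral>\<^sup>+ x. ennreal (\<bar>g x\<bar> powr p) \<partial>M) + (\<integral>\<^sup>+ x. ennreal (\<bar>f x\<bar> powr p) \<partial>M))"
      by (simp add: nn_integral_cmult nn_integral_add)
    also have "\<dots> < \<infinity>" using fi gi by (simp add: ennreal_mult_less_top)
    finally show ?thesis .
  qed
  have sfin: "s j < \<infinity>" for j
  proof -
    have "s j \<le> ennreal C ^ j * s 0" using sgrow[of j 0] by simp
    also have "\<dots> < \<infinity>"
    proof -
      have cp: "ennreal C ^ j = ennreal (C ^ j)" using C1 by (simp add: ennreal_power)
      show ?thesis using s0 unfolding cp by (simp add: ennreal_mult_less_top)
    qed
    finally show ?thesis .
  qed
  define d where "d j = lp_norm M p (\<lambda>z. (comp_op \<phi> ^^ j) g z - (comp_op \<phi> ^^ j) f z)" for j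
  have dform: "d j = enn2real (s j) powr (1/p)" for j
    unfolding d_def lp_norm_def s_def u_def comp_op_iter by simp
  have dlt: "d j < \<delta> \<longleftrightarrow> s j < ennreal (\<delta> powr p)" if "\<delta> > 0" for j \<delta>
  proof -
    have "d j < \<delta> \<longleftrightarrow> enn2real (s j) < \<delta> powr p" unfolding dform using that p
      by (intro powr_lt_iff) auto
    also have "\<dots> \<longleftrightarrow> ennreal (enn2real (s j)) < ennreal (\<delta> powr p)"
      by (simp add: ennreal_less_iff)
    also have "ennreal (enn2real (s j)) = s j" using sfin[of j] by simp
    finally show ?thesis .
  qed
  define e where "e = \<epsilon> powr p"
  have epos: "e > 0" using G(3) unfolding e_def by simp
  have big: "thick {j. ennreal e \<le> s j}"
  proof -
    have "lower_dens {j. d j < \<epsilon>} = 0" using Gp[OF G(3) g(1) f g(2)] unfolding d_def by blast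
    then have "thick (- {j. d j < \<epsilon>})" by (rule lower_dens_thick)
    then show ?thesis by (rule thick_mono) (auto simp: dlt[OF G(3)] e_def not_less)
  qed
  have small: "thick {j. s j < ennreal \<delta>}" if dp: "\<delta> > 0" for \<delta>
  proof -
    have d1: "\<delta> powr (1/p) > 0" using dp by simp
    have "upper_dens {j. d j < \<delta> powr (1/p)} = 1" using Gp[OF d1 g(1) f g(2)] unfolding d_def by blast
    then have "thick {j. d j < \<delta> powr (1/p)}" by (rule upper_dens_thick)
    moreover have "(\<delta> powr (1/p)) powr p = \<delta>" using p dp by (simp add: powr_powr)
    ultimately show ?thesis using thick_mono by (metis (no_types, lifting) Collect_mono dlt[OF d1])
  qed
  obtain \<alpha> n where cl1: "(\<Sum>i. ennreal (\<alpha> i) * s (n i)) < \<infinity>"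
    and cl2: "\<And>R::real. thick {j. ennreal R < (\<Sum>i. ennreal (\<alpha> i) * s (j + n i))}"
    and cl3: "\<And>\<delta>. \<delta> > 0 \<Longrightarrow> thick {j. (\<Sum>i. ennreal (\<alpha> i) * s (j + n i)) < ennreal \<delta>}"
    using irregular_seq[OF C1 epos sgrow big small] by blast
  define v where "v x = (\<Sum>i. ennreal (\<alpha> i) * u ((\<phi>^^n i) x))" for x
  have vm[measurable]: "v \<in> borel_measurable M" unfolding v_def using phi by measurable
  define t where "t j = (\<integral>\<^sup>+ x. v ((\<phi>^^j) x) \<partial>M)" for j
  have tform: "t j = (\<Sum>i. ennreal (\<alpha> i) * s (j + n i))" for j
  proof -
    have "t j = (\<integral>\<^sup>+ x. (\<Sum>i. ennreal (\<alpha> i) * u ((\<phi>^^(n i + j)) x)) \<partial>M)"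
      unfolding t_def v_def by (simp add: funpow_add)
    also have "\<dots> = (\<Sum>i. (\<integral>\<^sup>+ x. ennreal (\<alpha> i) * u ((\<phi>^^(n i + j)) x) \<partial>M))"
      by (rule nn_integral_suminf) (use phi in measurable)
    also have "\<dots> = (\<Sum>i. ennreal (\<alpha> i) * s (j + n i))"
      unfolding s_def by (subst nn_integral_cmult) (use phi in \<open>measurable\<close>, simp add: add.commute)
    finally show ?thesis .
  qed
  have t0: "t 0 < \<infinity>" using cl1 tform[of 0] by simp
  have tfin: "t j < \<infinity>" for j
  proof -
    have "t j \<le> ennreal C ^ j * t 0" using grow[OF vm, of j 0] unfolding t_def by simp
    also have "\<dots> < \<infinity>"
    proof -
      have cp: "ennreal C ^ j = ennreal (C ^ j)" using C1 by (simp add: ennreal_power)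
      show ?thesis using t0 unfolding cp by (simp add: ennreal_mult_less_top)
    qed
    finally show ?thesis .
  qed
  define F where "F x = enn2real (v x) powr (1/q)" for x
  have Fm[measurable]: "F \<in> borel_measurable M" unfolding F_def by measurable
  have Fnn: "F x \<ge> 0" for x unfolding F_def by simp
  have AEfin: "AE x in M. v ((\<phi>^^j) x) \<noteq> \<infinity>" for j
  proof (rule nn_integral_PInf_AE)
    show "(\<lambda>x. v ((\<phi>^^j) x)) \<in> borel_measurable M" using phi by measurable
    show "(\<integral>\<^sup>+ x. v ((\<phi>^^j) x) \<partial>M) \<noteq> \<infinity>" using tfin[of j] unfolding t_def by simp
  qed
  have key: "(\<integral>\<^sup>+ x. ennreal (\<bar>l * F ((\<phi>^^j) x) - m * F ((\<phi>^^j) x)\<bar> powr q) \<partial>M)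
      = ennreal (\<bar>l - m\<bar> powr q) * t j" for l m :: real and j
  proof -
    have pw: "\<bar>l * F y - m * F y\<bar> powr q = \<bar>l - m\<bar> powr q * enn2real (v y)" for y
    proof -
      have "\<bar>l * F y - m * F y\<bar> = \<bar>l - m\<bar> * F y" using Fnn[of y]
        by (simp add: left_diff_distrib[symmetric] abs_mult)
      then have "\<bar>l * F y - m * F y\<bar> powr q = \<bar>l - m\<bar> powr q * F y powr q" by (simp add: powr_mult)
      also have "F y powr q = enn2real (v y)" unfolding F_def using q by (simp add: powr_powr)
      finally show ?thesis .
    qed
    have "(\<integral>\<^sup>+ x. ennreal (\<bar>l * F ((\<phi>^^j) x) - m * F ((\<phi>^^j) x)\<bar> powr q) \<partial>M)
        = (\<integral>\<^sup>+ x. ennreal (\<bar>l - m\<bar> powr q) * ennreal (enn2real (v ((\<phi>^^j) x))) \<partial>M)"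
      by (simp add: pw ennreal_mult)
    also have "\<dots> = ennreal (\<bar>l - m\<bar> powr q) * (\<integral>\<^sup>+ x. ennreal (enn2real (v ((\<phi>^^j) x))) \<partial>M)"
      by (rule nn_integral_cmult) (use phi in measurable)
    also have "(\<integral>\<^sup>+ x. ennreal (enn2real (v ((\<phi>^^j) x))) \<partial>M) = t j"
      unfolding t_def
      by (rule nn_integral_cong_AE) (use AEfin[of j] in \<open>auto simp: less_top\<close>)
    finally show ?thesis .
  qed
  define \<Gamma>' where "\<Gamma>' = (\<lambda>l. \<lambda>x. l * F x) ` {0..1::real}"
  have Gsub: "\<Gamma>' \<subseteq> lp_space M q"
  proof
    fix G assume "G \<in> \<Gamma>'"
    then obtain l where l: "G = (\<lambda>x. l * F x)" unfolding \<Gamma>'_def by blast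
    have "(\<integral>\<^sup>+ x. ennreal (\<bar>G x\<bar> powr q) \<partial>M) = ennreal (\<bar>l - 0\<bar> powr q) * t 0"
      using key[where l=l and m=0 and j=0] l by simp
    also have "\<dots> < \<infinity>" using t0 by (simp add: ennreal_mult_less_top)
    finally show "G \<in> lp_space M q" unfolding lp_space_def l by simp
  qed
  obtain z where z: "F z \<noteq> 0"
  proof (rule ccontr)
    assume "\<not> thesis"
    then have F0: "F x = 0" for x using that by blast
    obtain j where j: "j \<in> {j. ennreal 0 < (\<Sum>i. ennreal (\<alpha> i) * s (j + n i))}"
      using thick_large[OF cl2[of 0]] by blast
    have z0: "(\<integral>\<^sup>+ x. ennreal (\<bar>1 * F ((\<phi>^^j) x) - 0 * F ((\<phi>^^j) x)\<bar> powr q) \<partial>M) = 0"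
      by (simp add: F0)
    have "ennreal (\<bar>1 - 0\<bar> powr q) * t j = 0" using key[where l=1 and m=0 and j=j] unfolding z0 by simp
    then have "t j = 0" by simp
    then show False using j tform[of j] by simp
  qed
  have inj: "inj_on (\<lambda>l. \<lambda>x. l * F x) {0..1::real}"
  proof (rule inj_onI)
    fix l m :: real assume "(\<lambda>x. l * F x) = (\<lambda>x. m * F x)"
    then have "l * F z = m * F z" by metis
    then show "l = m" using z by simp
  qed
  have unc: "uncountable \<Gamma>'"
  proof
    assume "countable \<Gamma>'"
    then have "countable {0..1::real}" using countable_image_inj_on[OF _ inj] unfolding \<Gamma>'_def by blast
    then show False using uncountable_closed_interval[of 0 "1::real"] by simp
  qed
  have dist: "lp_norm M q (\<lambda>x. (comp_op \<phi> ^^ j) (\<lambda>x. l * F x) x - (comp_op \<phi> ^^ j) (\<lambda>x. m * F x) x)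
      = \<bar>l - m\<bar> * enn2real (t j) powr (1/q)" for l m :: real and j
  proof -
    have "lp_norm M q (\<lambda>x. (comp_op \<phi> ^^ j) (\<lambda>x. l * F x) x - (comp_op \<phi> ^^ j) (\<lambda>x. m * F x) x)
        = (enn2real (ennreal (\<bar>l - m\<bar> powr q) * t j)) powr (1/q)"
      unfolding lp_norm_def comp_op_iter using key[where l=l and m=m and j=j] by simp
    also have "\<dots> = (\<bar>l - m\<bar> powr q * enn2real (t j)) powr (1/q)" by (simp add: enn2real_mult)
    also have "\<dots> = \<bar>l - m\<bar> * enn2real (t j) powr (1/q)" using q by (simp add: powr_mult powr_powr)
    finally show ?thesis .
  qed
  show ?thesis
    unfolding comp_op_distr_chaotic_Lp_def distr_chaotic_def
  proof (intro exI[of _ \<Gamma>'] conjI Gsub unc exI[of _ "1::real"] allI impI ballI)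
    show "(0::real) < 1" by simp
    fix \<delta> :: real and G1 G2 assume dp: "\<delta> > 0" and G1: "G1 \<in> \<Gamma>'" and G2: "G2 \<in> \<Gamma>'" and ne: "G1 \<noteq> G2"
    obtain l where l: "l \<in> {0..1}" "G1 = (\<lambda>x. l * F x)" using G1 unfolding \<Gamma>'_def by blast
    obtain m where m: "m \<in> {0..1}" "G2 = (\<lambda>x. m * F x)" using G2 unfolding \<Gamma>'_def by blast
    have lm: "l \<noteq> m" using ne l m by auto
    have lmpos: "\<bar>l - m\<bar> > 0" using lm by simp
    have lm1: "\<bar>l - m\<bar> \<le> 1" using l m by auto
    have tre: "t j = ennreal (enn2real (t j))" for j using tfin[of j] by simp
    show "lower_dens {j. lp_norm M q (\<lambda>x. (comp_op \<phi> ^^ j) G1 x - (comp_op \<phi> ^^ j) G2 x) < 1} = 0"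
    proof (rule thick_lower_dens)
      define R where "R = (1 / \<bar>l - m\<bar>) powr q"
      have Rnn: "R \<ge> 0" unfolding R_def by simp
      show "thick (- {j. lp_norm M q (\<lambda>x. (comp_op \<phi> ^^ j) G1 x - (comp_op \<phi> ^^ j) G2 x) < 1})"
      proof (rule thick_mono[OF cl2[of R]], safe)
        fix j assume j1: "ennreal R < (\<Sum>i. ennreal (\<alpha> i) * s (j + n i))"
          and j2: "lp_norm M q (\<lambda>x. (comp_op \<phi> ^^ j) G1 x - (comp_op \<phi> ^^ j) G2 x) < 1"
        have "ennreal R < ennreal (enn2real (t j))" using j1 tform[of j] tre[of j] by simp
        then have "R < enn2real (t j)" using Rnn by (simp add: ennreal_less_iff)
        then have "R powr (1/q) < enn2real (t j) powr (1/q)" using Rnn q by (intro powr_less_mono2) auto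
        moreover have "R powr (1/q) = 1 / \<bar>l - m\<bar>" unfolding R_def using q by (simp add: powr_powr)
        ultimately have "1 < \<bar>l - m\<bar> * enn2real (t j) powr (1/q)" using lmpos by (simp add: field_simps)
        then show False using j2 dist[of j l m] l m by simp
      qed
    qed
    show "upper_dens {j. lp_norm M q (\<lambda>x. (comp_op \<phi> ^^ j) G1 x - (comp_op \<phi> ^^ j) G2 x) < \<delta>} = 1"
    proof (rule thick_upper_dens)
      show "thick {j. lp_norm M q (\<lambda>x. (comp_op \<phi> ^^ j) G1 x - (comp_op \<phi> ^^ j) G2 x) < \<delta>}"
      proof (rule thick_mono[OF cl3[of "\<delta> powr q"]], safe)
        show "0 < \<delta> powr q" using dp by simp
        fix j assume j1: "(\<Sum>i. ennreal (\<alpha> i) * s (j + n i)) < ennreal (\<delta> powr q)"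
        have "ennreal (enn2real (t j)) < ennreal (\<delta> powr q)" using j1 tform[of j] tre[of j] by simp
        then have "enn2real (t j) < \<delta> powr q" by (simp add: ennreal_less_iff)
        then have a: "enn2real (t j) powr (1/q) < \<delta>" using powr_lt_iff[of "enn2real (t j)" \<delta> q] dp q by simp
        have "\<bar>l - m\<bar> * enn2real (t j) powr (1/q) \<le> 1 * enn2real (t j) powr (1/q)"
          using lm1 by (intro mult_right_mono) auto
        then show "lp_norm M q (\<lambda>x. (comp_op \<phi> ^^ j) G1 x - (comp_op \<phi> ^^ j) G2 x) < \<delta>"
          using a dist[of j l m] l m by simp
      qed
    qed
  qed
qed


theorem mainTheorem2:
  fixes M :: "'a measure" and \<phi> :: "'a \<Rightarrow> 'a" and c p p' :: real
  assumes "sigma_finite_measure M"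
    and "\<phi> \<in> measurable M M"
    and "c > 0"
    and "\<forall>B\<in>sets M. emeasure M (\<phi> -` B \<inter> space M) \<le> ennreal c * emeasure M B"
    and "1 \<le> p" and "1 \<le> p'"
  shows "comp_op_distr_chaotic_Lp M p \<phi> \<longleftrightarrow> comp_op_distr_chaotic_Lp M p' \<phi>"
  using onedir[OF assms(2,3,4,5,6)] onedir[OF assms(2,3,4,6,5)] by blast

end
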